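(* For every integer $m\ge 2$, the ordered covering array number $OCAN(2,m,2,2)$ equals the smallest positive integer $N$ such that $m\le \binom{N-1}{\lfloor N/2\rfloor -1}$.
   Context: For positive integers $m,s$, the RT poset $[m\times s]$ is the set $\{1,\ldots,ms\}$ partitioned into $m$ blocks $B_i=\{is+1,\ldots,(i+1)s\}$ ($i=0,\ldots,m-1$); each block is a chain under the usual order of the integers, and elements of different blocks are incomparable. An anti-ideal is the complement of an ideal (a down-closed set). Given an $N\times n$ array over an alphabet $V$ of size $v$, a set of $t$ columns is covered if in the $N\times t$ subarray formed by those columns every $t$-tuple over $V$ appears as a row at least once. For positive integers with $2\le t\le ms$, an ordered covering array $OCA(N;t,m,s,v)$ is an $N\times ms$ array over an alphabet of size $v$ with columns labeled by the elements of $[m\times s]$ such that for every anti-ideal $J$ of size $t$ the set of columns labeled by $J$ is covered; $OCAN(t,m,s,v)$ is the smallest $N$ for which an $OCA(N;t,m,s,v)$ exists. *)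

theory Defs
  imports Main
begin

text \<open>The RT poset [m x s]: ground set {1..m*s}; element x lies in block (x-1) div s;
  x precedes y iff they lie in the same block and x <= y as integers.\<close>

definition rt_elems :: "nat \<Rightarrow> nat \<Rightarrow> nat set" where
  "rt_elems m s = {1..m*s}"

definition rt_le :: "nat \<Rightarrow> nat \<Rightarrow> nat \<Rightarrow> bool" where
  "rt_le s x y \<longleftrightarrow> (x - 1) div s = (y - 1) div s \<and> x \<le> y"

definition rt_ideal :: "nat \<Rightarrow> nat \<Rightarrow> nat set \<Rightarrow> bool" where
  "rt_ideal m s I \<longleftrightarrow> I \<subseteq> rt_elems m s \<and>
     (\<forall>x\<in>I. \<forall>y\<in>rt_elems m s. rt_le s y x \<longrightarrow> y \<in> I)"

definition rt_anti_ideal :: "nat \<Rightarrow> nat \<Rightarrow> nat set \<Rightarrow> bool" where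
  "rt_anti_ideal m s J \<longleftrightarrow> (\<exists>I. rt_ideal m s I \<and> J = rt_elems m s - I)"

text \<open>An N x n array over the alphabet {0..<v}: A r c is the entry in row r (r < N) and
  column c.\<close>

definition covered :: "nat \<Rightarrow> nat \<Rightarrow> (nat \<Rightarrow> nat \<Rightarrow> nat) \<Rightarrow> nat set \<Rightarrow> bool" where
  "covered N v A C \<longleftrightarrow>
     (\<forall>f. (\<forall>c\<in>C. f c < v) \<longrightarrow> (\<exists>r<N. \<forall>c\<in>C. A r c = f c))"

definition is_OCA :: "nat \<Rightarrow> nat \<Rightarrow> nat \<Rightarrow> nat \<Rightarrow> nat \<Rightarrow> (nat \<Rightarrow> nat \<Rightarrow> nat) \<Rightarrow> bool" where
  "is_OCA N t m s v A \<longleftrightarrow>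
     2 \<le> t \<and> t \<le> m * s \<and>
     (\<forall>r<N. \<forall>c\<in>rt_elems m s. A r c < v) \<and>
     (\<forall>J. rt_anti_ideal m s J \<and> card J = t \<longrightarrow> covered N v A J)"

definition OCA_exists :: "nat \<Rightarrow> nat \<Rightarrow> nat \<Rightarrow> nat \<Rightarrow> nat \<Rightarrow> bool" where
  "OCA_exists N t m s v \<longleftrightarrow> (\<exists>A. is_OCA N t m s v A)"

definition OCAN :: "nat \<Rightarrow> nat \<Rightarrow> nat \<Rightarrow> nat \<Rightarrow> nat" where
  "OCAN t m s v = (LEAST N. OCA_exists N t m s v)"

end

theory Submission
  imports Defs Complex_Main "HOL-Combinatorics.Multiset_Permutations"
begin


definition cpos :: "nat \<Rightarrow> nat \<Rightarrow> nat \<Rightarrow> nat set" where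
  "cpos n i b = (\<lambda>k. (i + k) mod n) ` {..<b}"

lemma mem_cpos:
  assumes "i < n" "b \<le> n"
  shows "x \<in> cpos n i b \<longleftrightarrow> x < n \<and> (i \<le> x \<and> x < i + b \<or> x + n < i + b)"
proof
  assume "x \<in> cpos n i b"
  then obtain k where k: "k < b" "x = (i + k) mod n" unfolding cpos_def by auto
  show "x < n \<and> (i \<le> x \<and> x < i + b \<or> x + n < i + b)"
  proof (cases "i + k < n")
    case True
    then show ?thesis using k by auto
  next
    case False
    then have "x = i + k - n" using k assms by (simp add: mod_if)
    then show ?thesis using k assms False by auto
  qed
next
  assume h: "x < n \<and> (i \<le> x \<and> x < i + b \<or> x + n < i + b)"
  show "x \<in> cpos n i b"
  proof (cases "i \<le> x \<and> x < i + b")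
    case True
    then have "x = (i + (x - i)) mod n" "x - i < b" using h by auto
    then show ?thesis unfolding cpos_def by blast
  next
    case False
    then have "x = (i + (x + n - i)) mod n" "x + n - i < b" using h assms by auto
    then show ?thesis unfolding cpos_def by blast
  qed
qed

lemma katona_pos0:
  fixes I :: "nat set" and len :: "nat \<Rightarrow> nat"
  assumes n: "0 < n" and I: "I \<subseteq> {..<n}" and I0: "0 \<in> I"
    and lenb: "\<And>i. i \<in> I \<Longrightarrow> 1 \<le> len i \<and> 2 * len i \<le> n"
    and pw: "\<And>i j. i \<in> I \<Longrightarrow> j \<in> I \<Longrightarrow> i \<noteq> j \<Longrightarrow>
               cpos n i (len i) \<inter> cpos n j (len j) \<noteq> {} \<and> \<not> cpos n i (len i) \<subseteq> cpos n j (len j)"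
  shows "card I \<le> len 0"
proof -
  define a where "a = len 0"
  define \<phi> where "\<phi> i = (if i < a then i else i + len i - n)" for i
  have ltn: "i < n" if "i \<in> I" for i using I that by auto
  have mem: "x \<in> cpos n i (len i) \<longleftrightarrow> x < n \<and> (i \<le> x \<and> x < i + len i \<or> x + n < i + len i)"
    if "i \<in> I" for i x using mem_cpos[OF ltn[OF that], of "len i" x] lenb[OF that] by auto
  have big: "n < i + len i \<and> i + len i < n + a" if i: "i \<in> I" "i \<noteq> 0" "a \<le> i" for i
  proof -
    have l0: "1 \<le> a" "2 * a \<le> n" using lenb[OF I0] a_def by auto
    have p1: "cpos n i (len i) \<inter> cpos n 0 a \<noteq> {}" using pw[OF i(1) I0 i(2)] a_def by simp
    have p2: "\<not> cpos n 0 a \<subseteq> cpos n i (len i)" using pw[OF I0 i(1) i(2)[symmetric]] a_def by simp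
    obtain x where x: "x \<in> cpos n i (len i)" "x \<in> cpos n 0 a" using p1 by blast
    obtain y where y: "y \<in> cpos n 0 a" "y \<notin> cpos n i (len i)" using p2 by blast
    have m0: "z \<in> cpos n 0 a \<longleftrightarrow> z < a" for z
      using mem[OF I0, of z] l0 a_def by auto
    have x': "x < a" "x < n \<and> (i \<le> x \<and> x < i + len i \<or> x + n < i + len i)"
      using x m0 mem[OF i(1)] by auto
    have y': "y < a" "\<not> (i \<le> y \<and> y < i + len i \<or> y + n < i + len i)"
      using y m0 mem[OF i(1)] l0 by auto
    have "x + n < i + len i" using x' i(3) by linarith
    moreover have "i + len i \<le> y + n" using y' by linarith
    ultimately show ?thesis using y'(1) by linarith
  qed
  have maps: "\<phi> ` (I - {0}) \<subseteq> {1..<a}"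
  proof
    fix z assume "z \<in> \<phi> ` (I - {0})"
    then obtain i where i: "i \<in> I" "i \<noteq> 0" "z = \<phi> i" by auto
    show "z \<in> {1..<a}"
    proof (cases "i < a")
      case True then show ?thesis using i \<phi>_def by auto
    next
      case False then show ?thesis using big[OF i(1,2)] i \<phi>_def by auto
    qed
  qed
  have inj: "inj_on \<phi> (I - {0})"
  proof (rule inj_onI)
    fix i j assume i: "i \<in> I - {0}" and j: "j \<in> I - {0}" and e: "\<phi> i = \<phi> j"
    show "i = j"
    proof (rule ccontr)
      assume ne: "i \<noteq> j"
      have cross: False if p: "p \<in> I" "q \<in> I" "p \<noteq> 0" "q \<noteq> 0" "p < a" "a \<le> q" "p = q + len q - n" for p q
      proof -
        have "p \<noteq> q" using p by auto
        from pw[OF p(1,2) this] obtain x where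
          x: "x \<in> cpos n p (len p)" "x \<in> cpos n q (len q)" by blast
        have hp: "x < n \<and> (p \<le> x \<and> x < p + len p \<or> x + n < p + len p)" using mem[OF p(1)] x(1) by blast
        have hq: "x < n \<and> (q \<le> x \<and> x < q + len q \<or> x + n < q + len q)" using mem[OF p(2)] x(2) by blast
        have e: "p + n = q + len q" using p(7) big[OF p(2,4,6)] by linarith
        have lp: "2 * len p \<le> n" and lq: "2 * len q \<le> n" using lenb p by auto
        have qn: "q < n" using ltn p by auto
        show False using hp hq e lp lq qn p(5,6) by (elim conjE disjE; linarith)
      qed
      have same: False if p: "p \<in> I" "q \<in> I" "p < q" "p + len p = q + len q" for p q
      proof -
        have "p \<noteq> q" using p by auto
        from pw[OF p(2,1) this[symmetric]] have "\<not> cpos n q (len q) \<subseteq> cpos n p (len p)" by blast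
        moreover have "cpos n q (len q) \<subseteq> cpos n p (len p)"
        proof
          fix x assume "x \<in> cpos n q (len q)"
          then have "x < n \<and> (q \<le> x \<and> x < q + len q \<or> x + n < q + len q)" using mem[OF p(2)] by blast
          then have "x < n \<and> (p \<le> x \<and> x < p + len p \<or> x + n < p + len p)" using p(3,4) by (elim conjE disjE; linarith)
          then show "x \<in> cpos n p (len p)" using mem[OF p(1)] by blast
        qed
        ultimately show False by blast
      qed
      have iI: "i \<in> I" "i \<noteq> 0" and jI: "j \<in> I" "j \<noteq> 0" using i j by auto
      consider "i < a" "j < a" | "i < a" "\<not> j < a" | "\<not> i < a" "j < a" | "\<not> i < a" "\<not> j < a" by blast
      then show False
      proof cases
        case 1
        then have "\<phi> i = i" "\<phi> j = j" unfolding \<phi>_def by auto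
        then show False using e ne by simp
      next
        case 2
        then have "\<phi> i = i" "\<phi> j = j + len j - n" unfolding \<phi>_def by auto
        then have "i = j + len j - n" using e by simp
        then show False using cross[OF iI(1) jI(1) iI(2) jI(2)] 2 by linarith
      next
        case 3
        then have "\<phi> j = j" "\<phi> i = i + len i - n" unfolding \<phi>_def by auto
        then have "j = i + len i - n" using e by simp
        then show False using cross[OF jI(1) iI(1) jI(2) iI(2)] 3 by linarith
      next
        case 4
        then have "\<phi> j = j + len j - n" "\<phi> i = i + len i - n" unfolding \<phi>_def by auto
        moreover have "n < i + len i" using big[OF iI] 4 by linarith
        moreover have "n < j + len j" using big[OF jI] 4 by linarith
        ultimately have "i + len i = j + len j" using e by linarith
        then show False using same[OF iI(1) jI(1)] same[OF jI(1) iI(1)] ne by linarith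
      qed
    qed
  qed
  have fin: "finite I" using I finite_subset by blast
  have "card (I - {0}) \<le> card {1..<a}"
    using card_inj_on_le[OF inj maps] by simp
  then have "card (I - {0}) \<le> a - 1" by simp
  moreover have "card I > 0" using fin I0 card_gt_0_iff by blast
  moreover have "card (I - {0}) = card I - 1" using fin I0 by (simp add: card_Diff_singleton)
  moreover have "1 \<le> a" using lenb[OF I0] a_def by auto
  ultimately show ?thesis unfolding a_def by linarith
qed



lemma cpos_sub: "0 < n \<Longrightarrow> cpos n i b \<subseteq> {..<n}"
  unfolding cpos_def by auto

lemma cpos_shift:
  assumes "0 < n"
  shows "cpos n ((i + c) mod n) b = (\<lambda>x. (x + c) mod n) ` cpos n i b"
proof -
  have "((i + c) mod n + k) mod n = ((i + k) mod n + c) mod n" for k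
    by (metis add.commute add.left_commute mod_add_left_eq)
  then show ?thesis unfolding cpos_def image_image by simp
qed

lemma inj_on_image_subset_iff':
  assumes "inj_on f C" "A \<subseteq> C" "B \<subseteq> C"
  shows "(f ` A \<subseteq> f ` B) = (A \<subseteq> B)"
proof
  assume h: "f ` A \<subseteq> f ` B"
  show "A \<subseteq> B"
  proof
    fix x assume "x \<in> A"
    then have "f x \<in> f ` B" using h by auto
    then show "x \<in> B" using inj_on_image_mem_iff[OF assms(1) _ assms(3)] \<open>x \<in> A\<close> assms(2) by blast
  qed
qed auto

lemma katona_pos:
  fixes I :: "nat set" and len :: "nat \<Rightarrow> nat"
  assumes n: "0 < n" and I: "I \<subseteq> {..<n}" and I0: "i0 \<in> I"
    and lenb: "\<And>i. i \<in> I \<Longrightarrow> 1 \<le> len i \<and> 2 * len i \<le> n"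
    and pw: "\<And>i j. i \<in> I \<Longrightarrow> j \<in> I \<Longrightarrow> i \<noteq> j \<Longrightarrow>
               cpos n i (len i) \<inter> cpos n j (len j) \<noteq> {} \<and> \<not> cpos n i (len i) \<subseteq> cpos n j (len j)"
  shows "card I \<le> len i0"
proof -
  define \<tau> where "\<tau> x = (x + (n - i0)) mod n" for x
  define \<sigma> where "\<sigma> y = (y + i0) mod n" for y
  have i0n: "i0 < n" using I I0 by auto
  have st: "\<sigma> (\<tau> x) = x" if "x < n" for x
  proof -
    have "\<sigma> (\<tau> x) = (x + (n - i0) + i0) mod n" unfolding \<sigma>_def \<tau>_def by (simp add: mod_add_left_eq)
    also have "\<dots> = (x + n) mod n" using i0n by simp
    finally show ?thesis using that by simp
  qed
  have injt: "inj_on \<tau> {..<n}" by (rule inj_on_inverseI[where g = \<sigma>]) (use st in auto)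
  define I' where "I' = \<tau> ` I"
  define len' where "len' j = len (\<sigma> j)" for j
  have cardI: "card I' = card I" unfolding I'_def
    using card_image inj_on_subset[OF injt I] by blast
  have t0: "\<tau> i0 = 0" unfolding \<tau>_def using i0n by simp
  have len't: "len' (\<tau> i) = len i" if "i \<in> I" for i using st that I len'_def by auto
  have cp: "cpos n (\<tau> i) b = \<tau> ` cpos n i b" for i b
    unfolding \<tau>_def using cpos_shift[OF n] by simp
  have "card I' \<le> len' 0"
  proof (rule katona_pos0[OF n])
    show "I' \<subseteq> {..<n}" unfolding I'_def \<tau>_def using n by auto
    show "0 \<in> I'" unfolding I'_def using t0 I0 by force
    show "1 \<le> len' i \<and> 2 * len' i \<le> n" if "i \<in> I'" for i
      using that lenb len't unfolding I'_def by auto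
    fix i j assume i: "i \<in> I'" and j: "j \<in> I'" and ne: "i \<noteq> j"
    obtain i1 where i1: "i1 \<in> I" "i = \<tau> i1" using i I'_def by auto
    obtain j1 where j1: "j1 \<in> I" "j = \<tau> j1" using j I'_def by auto
    have ne1: "i1 \<noteq> j1" using ne i1 j1 by auto
    have e1: "cpos n i (len' i) = \<tau> ` cpos n i1 (len i1)" using i1 len't cp by simp
    have e2: "cpos n j (len' j) = \<tau> ` cpos n j1 (len j1)" using j1 len't cp by simp
    have s1: "cpos n i1 (len i1) \<subseteq> {..<n}" "cpos n j1 (len j1) \<subseteq> {..<n}" using cpos_sub[OF n] by auto
    have "\<tau> ` cpos n i1 (len i1) \<inter> \<tau> ` cpos n j1 (len j1) = \<tau> ` (cpos n i1 (len i1) \<inter> cpos n j1 (len j1))"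
      using inj_on_image_Int[OF injt s1] by simp
    moreover have "(\<tau> ` cpos n i1 (len i1) \<subseteq> \<tau> ` cpos n j1 (len j1)) = (cpos n i1 (len i1) \<subseteq> cpos n j1 (len j1))"
      using inj_on_image_subset_iff'[OF injt s1] by simp
    ultimately show "cpos n i (len' i) \<inter> cpos n j (len' j) \<noteq> {} \<and> \<not> cpos n i (len' i) \<subseteq> cpos n j (len' j)"
      using pw[OF i1(1) j1(1) ne1] e1 e2 by auto
  qed
  moreover have "len' 0 = len i0" using len't[OF I0] t0 by simp
  ultimately show ?thesis using cardI by simp
qed



lemma cpos_inj:
  assumes "i < n" "j < n" "1 \<le> b" "2 * b \<le> n" "cpos n i b = cpos n j b"
  shows "i = j"
proof -
  have bn: "b \<le> n" using assms by linarith
  have "i \<in> cpos n i b" using mem_cpos[OF assms(1) bn, of i] assms by auto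
  then have hi: "i \<le> j \<and> j \<le> i \<and> True \<or> j \<le> i \<and> i < j + b \<or> i + n < j + b"
    using mem_cpos[OF assms(2) bn, of i] assms(5) by auto
  have "j \<in> cpos n j b" using mem_cpos[OF assms(2) bn, of j] assms by auto
  then have hj: "i \<le> j \<and> j < i + b \<or> j + n < i + b"
    using mem_cpos[OF assms(1) bn, of j] assms(5) by auto
  show ?thesis using hi hj assms(4) by (elim disjE conjE; linarith)
qed

lemma set_take_rotate:
  assumes "length xs = n" "b \<le> n"
  shows "set (take b (rotate i xs)) = (nth xs) ` cpos n i b"
proof -
  have "set (take b (rotate i xs)) = (nth (rotate i xs)) ` {0..<b}"
    using nth_image[of b "rotate i xs"] assms by simp
  also have "\<dots> = (\<lambda>k. xs ! ((i + k) mod n)) ` {0..<b}"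
    using assms by (intro image_cong) (auto simp: nth_rotate)
  also have "\<dots> = (nth xs) ` cpos n i b" unfolding cpos_def by (auto simp: image_image)
  finally show ?thesis .
qed

definition goodfam :: "nat \<Rightarrow> nat set set \<Rightarrow> bool" where
  "goodfam n F \<longleftrightarrow> finite F \<and> (\<forall>A\<in>F. A \<subseteq> {..<n} \<and> 1 \<le> card A \<and> 2 * card A \<le> n) \<and>
     (\<forall>A\<in>F. \<forall>B\<in>F. A \<noteq> B \<longrightarrow> A \<inter> B \<noteq> {} \<and> \<not> A \<subseteq> B)"

lemma katona_list:
  assumes G: "goodfam n F" and xs: "distinct xs" "length xs = n" and n: "0 < n"
  shows "(\<Sum>i<n. \<Sum>A\<in>F. if set (take (card A) (rotate i xs)) = A then 1 / real (card A) else 0) \<le> 1"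
proof -
  have finF: "finite F" using G goodfam_def by auto
  have Fb: "\<And>A. A \<in> F \<Longrightarrow> 1 \<le> card A \<and> 2 * card A \<le> n" using G goodfam_def by auto
  have Fp: "\<And>A B. A \<in> F \<Longrightarrow> B \<in> F \<Longrightarrow> A \<noteq> B \<Longrightarrow> A \<inter> B \<noteq> {} \<and> \<not> A \<subseteq> B"
    using G unfolding goodfam_def by blast
  define Q where "Q i A \<longleftrightarrow> A \<in> F \<and> set (take (card A) (rotate i xs)) = A" for i A
  have uniq: "A = B" if "Q i A" "Q i B" for i A B
  proof (rule ccontr)
    assume ne: "A \<noteq> B"
    have "set (take (card A) (rotate i xs)) \<subseteq> set (take (card B) (rotate i xs)) \<or>
          set (take (card B) (rotate i xs)) \<subseteq> set (take (card A) (rotate i xs))"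
    proof (cases "card A \<le> card B")
      case True then show ?thesis by (simp add: set_take_subset_set_take)
    next
      case False then have "card B \<le> card A" by simp
      then show ?thesis by (simp add: set_take_subset_set_take)
    qed
    moreover have "A \<in> F" "B \<in> F" "set (take (card A) (rotate i xs)) = A" "set (take (card B) (rotate i xs)) = B"
      using that unfolding Q_def by auto
    ultimately have "A \<subseteq> B \<or> B \<subseteq> A" by simp
    then show False using Fp[of A B] Fp[of B A] \<open>A \<in> F\<close> \<open>B \<in> F\<close> ne by blast
  qed
  define I where "I = {i. i < n \<and> (\<exists>A. Q i A)}"
  define Ai where "Ai i = (SOME A. Q i A)" for i
  have QAi: "Q i (Ai i)" if "i \<in> I" for i
  proof -
    have "\<exists>A. Q i A" using that unfolding I_def by blast
    then show ?thesis unfolding Ai_def by (rule someI_ex)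
  qed
  define len where "len i = card (Ai i)" for i
  have inner: "(\<Sum>A\<in>F. if set (take (card A) (rotate i xs)) = A then 1 / real (card A) else 0)
        = (if i \<in> I then 1 / real (len i) else 0)" if "i < n" for i
  proof (cases "i \<in> I")
    case True
    have "(\<Sum>A\<in>F. if set (take (card A) (rotate i xs)) = A then 1 / real (card A) else 0)
        = (\<Sum>A\<in>F. if A = Ai i then 1 / real (card A) else 0)"
    proof (rule sum.cong[OF refl])
      fix A assume "A \<in> F"
      then have "set (take (card A) (rotate i xs)) = A \<longleftrightarrow> A = Ai i"
        using uniq[of i A "Ai i"] QAi[OF True] Q_def by blast
      then show "(if set (take (card A) (rotate i xs)) = A then 1 / real (card A) else 0)
          = (if A = Ai i then 1 / real (card A) else 0)" by simp
    qed
    also have "\<dots> = 1 / real (len i)" using finF QAi[OF True] unfolding Q_def len_def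
      by (simp add: sum.delta')
    finally show ?thesis using True by simp
  next
    case False
    then have "\<forall>A\<in>F. set (take (card A) (rotate i xs)) \<noteq> A" using that I_def Q_def by auto
    then show ?thesis using False by simp
  qed
  have "(\<Sum>i<n. \<Sum>A\<in>F. if set (take (card A) (rotate i xs)) = A then 1 / real (card A) else 0)
      = (\<Sum>i<n. if i \<in> I then 1 / real (len i) else 0)" using inner by simp
  also have "\<dots> = (\<Sum>i\<in>I. 1 / real (len i))"
  proof -
    have "{..<n} \<inter> I = I" by (auto simp: I_def)
    then show ?thesis using sum.inter_restrict[OF finite_lessThan[of n], of "\<lambda>i. 1 / real (len i)" I] by simp
  qed
  also have "\<dots> \<le> 1"
  proof (cases "I = {}")
    case True then show ?thesis by simp
  next
    case False
    have Isub: "I \<subseteq> {..<n}" unfolding I_def by auto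
    have finI: "finite I" using Isub finite_subset by blast
    have lenb: "1 \<le> len i \<and> 2 * len i \<le> n" if "i \<in> I" for i
      using QAi[OF that] Fb Q_def len_def by auto
    have pos: "Ai i = (nth xs) ` cpos n i (len i)" if "i \<in> I" for i
      using QAi[OF that] set_take_rotate[OF xs(2), of "len i" i] lenb[OF that] Q_def len_def by auto
    have injx: "inj_on (nth xs) {..<n}" using inj_on_nth[OF xs(1)] xs(2) by simp
    have cs: "cpos n i b \<subseteq> {..<n}" for i b using cpos_sub[OF n] .
    have cardle: "card I \<le> len i0" if "i0 \<in> I" for i0
    proof (rule katona_pos[OF n Isub that lenb])
      fix i j assume i: "i \<in> I" and j: "j \<in> I" and ne: "i \<noteq> j"
      have "Ai i \<noteq> Ai j"
      proof
        assume e: "Ai i = Ai j"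
        then have "len i = len j" using len_def by simp
        moreover have "cpos n i (len i) = cpos n j (len j)"
          using e pos[OF i] pos[OF j] inj_on_image_eq_iff[OF injx cs cs] by metis
        ultimately show False using cpos_inj[of i n j "len i"] lenb[OF i] ne i j Isub by auto
      qed
      then have h: "Ai i \<inter> Ai j \<noteq> {} \<and> \<not> Ai i \<subseteq> Ai j" using Fp QAi[OF i] QAi[OF j] Q_def by blast
      have "(nth xs) ` (cpos n i (len i) \<inter> cpos n j (len j)) = Ai i \<inter> Ai j"
        using inj_on_image_Int[OF injx cs cs] pos[OF i] pos[OF j] by simp
      moreover have "(Ai i \<subseteq> Ai j) = (cpos n i (len i) \<subseteq> cpos n j (len j))"
        using inj_on_image_subset_iff'[OF injx cs cs] pos[OF i] pos[OF j] by simp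
      ultimately show "cpos n i (len i) \<inter> cpos n j (len j) \<noteq> {} \<and> \<not> cpos n i (len i) \<subseteq> cpos n j (len j)"
        using h by auto
    qed
    have "(\<Sum>i\<in>I. 1 / real (len i)) \<le> (\<Sum>i\<in>I. 1 / real (card I))"
    proof (rule sum_mono)
      fix i assume "i \<in> I"
      then have "real (card I) \<le> real (len i)" "0 < real (card I)" using cardle finI False
        by (auto simp: card_gt_0_iff)
      then show "1 / real (len i) \<le> 1 / real (card I)" by (simp add: frac_le)
    qed
    also have "\<dots> = 1" using finI False by simp
    finally show ?thesis .
  qed
  finally show ?thesis .
qed



lemma count_prefix:
  fixes S :: "nat set"
  assumes S: "finite S" and A: "A \<subseteq> S" "card A = b"
  shows "card {ys \<in> permutations_of_set S. set (take b ys) = A} = fact b * fact (card S - b)"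
proof -
  have fA: "finite A" using S A finite_subset by blast
  define f where "f p = fst p @ snd p" for p :: "nat list \<times> nat list"
  have eq: "{ys \<in> permutations_of_set S. set (take b ys) = A}
      = f ` (permutations_of_set A \<times> permutations_of_set (S - A))"
  proof (intro equalityI subsetI)
    fix ys assume "ys \<in> {ys \<in> permutations_of_set S. set (take b ys) = A}"
    then have ys: "set ys = S" "distinct ys" "set (take b ys) = A"
      by (auto simp: permutations_of_set_def)
    have d1: "distinct (take b ys)" "distinct (drop b ys)" using ys(2) by auto
    have "set (take b ys) \<inter> set (drop b ys) = {}"
      using ys(2) by (metis append_take_drop_id distinct_append)
    moreover have "set (take b ys) \<union> set (drop b ys) = S"
      using ys(1) by (metis append_take_drop_id set_append)
    ultimately have "set (drop b ys) = S - A" using ys(3) by blast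
    then have "(take b ys, drop b ys) \<in> permutations_of_set A \<times> permutations_of_set (S - A)"
      using d1 ys(3) by (auto simp: permutations_of_set_def)
    moreover have "ys = f (take b ys, drop b ys)" unfolding f_def by simp
    ultimately show "ys \<in> f ` (permutations_of_set A \<times> permutations_of_set (S - A))" by blast
  next
    fix ys assume "ys \<in> f ` (permutations_of_set A \<times> permutations_of_set (S - A))"
    then obtain u v where uv: "ys = u @ v" "set u = A" "distinct u" "set v = S - A" "distinct v"
      by (auto simp: permutations_of_set_def f_def)
    have lu: "length u = b" using uv(2,3) A(2) distinct_card by fastforce
    show "ys \<in> {ys \<in> permutations_of_set S. set (take b ys) = A}"
      using uv lu A(1) by (auto simp: permutations_of_set_def)
  qed
  have inj: "inj_on f (permutations_of_set A \<times> permutations_of_set (S - A))"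
  proof (rule inj_onI)
    fix p q assume p: "p \<in> permutations_of_set A \<times> permutations_of_set (S - A)"
      and q: "q \<in> permutations_of_set A \<times> permutations_of_set (S - A)" and e: "f p = f q"
    have "length (fst p) = card A" "length (fst q) = card A"
      using p q distinct_card by (fastforce simp: permutations_of_set_def)+
    then show "p = q" using e unfolding f_def
      by (metis append_eq_append_conv prod.collapse)
  qed
  have "card {ys \<in> permutations_of_set S. set (take b ys) = A}
      = card (permutations_of_set A \<times> permutations_of_set (S - A))"
    using eq card_image[OF inj] by simp
  also have "\<dots> = fact b * fact (card S - b)"
    using fA S A by (simp add: card_cartesian_product card_Diff_subset)
  finally show ?thesis .
qed

lemma rotate_back_aux:
  assumes "xs \<noteq> []"
  shows "(length xs - i mod length xs + i) mod length xs = 0"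
proof -
  have "(length xs - i mod length xs + i) mod length xs = (length xs - i mod length xs + i mod length xs) mod length xs"
    by (simp add: mod_add_right_eq)
  also have "\<dots> = 0" using assms by simp
  finally show ?thesis .
qed

lemma rotate_back:
  "rotate (length xs - i mod length xs) (rotate i xs) = xs"
  "rotate i (rotate (length xs - i mod length xs) xs) = xs"
proof -
  show "rotate (length xs - i mod length xs) (rotate i xs) = xs"
  proof (cases "xs = []")
    case False then show ?thesis using rotate_back_aux[OF False, of i] by (simp add: rotate_rotate)
  qed simp
  show "rotate i (rotate (length xs - i mod length xs) xs) = xs"
  proof (cases "xs = []")
    case False then show ?thesis using rotate_back_aux[OF False, of i] by (simp add: rotate_rotate add.commute)
  qed simp
qed

lemma count_rotate:
  "card {xs \<in> permutations_of_set S. Q (rotate i xs)} = card {ys \<in> permutations_of_set S. Q ys}"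
proof -
  have inj: "inj_on (rotate i) X" for X :: "'a list set"
    by (rule inj_on_inverseI[where g = "\<lambda>ys. rotate (length ys - i mod length ys) ys"])
       (simp add: rotate_back)
  have "rotate i ` {xs \<in> permutations_of_set S. Q (rotate i xs)} = {ys \<in> permutations_of_set S. Q ys}"
  proof (intro equalityI subsetI)
    fix ys assume "ys \<in> rotate i ` {xs \<in> permutations_of_set S. Q (rotate i xs)}"
    then show "ys \<in> {ys \<in> permutations_of_set S. Q ys}" by (auto simp: permutations_of_set_def)
  next
    fix ys assume ys: "ys \<in> {ys \<in> permutations_of_set S. Q ys}"
    define xs where "xs = rotate (length ys - i mod length ys) ys"
    have "rotate i xs = ys" unfolding xs_def by (simp add: rotate_back)
    moreover have "xs \<in> permutations_of_set S" using ys unfolding xs_def by (auto simp: permutations_of_set_def)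
    ultimately show "ys \<in> rotate i ` {xs \<in> permutations_of_set S. Q (rotate i xs)}" using ys by force
  qed
  then show ?thesis using card_image[OF inj] by metis
qed

lemma fact_identity:
  assumes "1 \<le> a" "a \<le> n"
  shows "real (fact a * fact (n - a)) / real a * real n = fact n / real ((n - 1) choose (a - 1))"
proof -
  have c: "fact (a - 1) * fact (n - a) * ((n - 1) choose (a - 1)) = fact (n - 1)"
    using binomial_fact_lemma[of "a - 1" "n - 1"] assms by simp
  have fa: "fact a = a * (fact (a - 1) :: nat)" using assms fact_reduce[of a, where 'a=nat] by simp
  have fn: "fact n = n * (fact (n - 1) :: nat)" using assms fact_reduce[of n, where 'a=nat] by simp
  have cpos: "0 < ((n - 1) choose (a - 1))" using assms by simp
  have "fact a * fact (n - a) * ((n - 1) choose (a - 1)) * n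
      = a * (fact (a - 1) * fact (n - a) * ((n - 1) choose (a - 1))) * (n :: nat)"
    by (simp add: fa algebra_simps)
  also have "\<dots> = a * (fact n :: nat)" using c fn by simp
  finally have nat_id: "fact a * fact (n - a) * ((n - 1) choose (a - 1)) * n = a * (fact n :: nat)" .
  have "real (fact a * fact (n - a) * ((n - 1) choose (a - 1)) * n) = real (a * fact n)"
    using nat_id by (simp only:)
  then have "real (fact a * fact (n - a)) * real ((n - 1) choose (a - 1)) * real n = real a * fact n"
    by (simp only: of_nat_mult of_nat_fact)
  then show ?thesis using cpos assms by (simp add: field_simps)
qed



lemma sum_if_const:
  assumes "finite P"
  shows "(\<Sum>x\<in>P. if Q x then (c::real) else 0) = real (card {x \<in> P. Q x}) * c"
proof -
  have "(\<Sum>x\<in>{x \<in> P. Q x}. c) = (\<Sum>x\<in>P. if Q x then c else 0)"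
    by (rule sum.inter_filter[OF assms])
  then show ?thesis by simp
qed

lemma lym_katona:
  assumes G: "goodfam n F" and n: "0 < n"
  shows "(\<Sum>A\<in>F. 1 / real ((n - 1) choose (card A - 1))) \<le> 1"
proof -
  define P where "P = permutations_of_set {..<n}"
  have finP: "finite P" unfolding P_def by simp
  have cardP: "card P = fact n" unfolding P_def by simp
  have finF: "finite F" using G goodfam_def by auto
  have Fb: "\<And>A. A \<in> F \<Longrightarrow> A \<subseteq> {..<n} \<and> 1 \<le> card A \<and> 2 * card A \<le> n" using G goodfam_def by auto
  define g where "g xs i A = (if set (take (card A) (rotate i xs)) = A then 1 / real (card A) else 0)"
    for xs :: "nat list" and i :: nat and A :: "nat set"
  have W1: "(\<Sum>i<n. \<Sum>A\<in>F. g xs i A) \<le> 1" if "xs \<in> P" for xs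
  proof -
    have xs: "distinct xs" "set xs = {..<n}" using that unfolding P_def by (auto simp: permutations_of_set_def)
    have "length xs = n" using distinct_card[OF xs(1)] xs(2) by simp
    then show ?thesis using katona_list[OF G xs(1) _ n] unfolding g_def by simp
  qed
  have inner: "(\<Sum>xs\<in>P. g xs i A) = real (fact n) / real ((n - 1) choose (card A - 1)) / real n"
    if A: "A \<in> F" for i A
  proof -
    have "(\<Sum>xs\<in>P. g xs i A) = real (card {xs \<in> P. set (take (card A) (rotate i xs)) = A}) * (1 / real (card A))"
      unfolding g_def using sum_if_const[OF finP] by simp
    also have "card {xs \<in> P. set (take (card A) (rotate i xs)) = A} = card {ys \<in> P. set (take (card A) ys) = A}"
      unfolding P_def by (rule count_rotate)
    also have "\<dots> = fact (card A) * fact (n - card A)"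
      unfolding P_def using count_prefix[of "{..<n}" A "card A"] Fb[OF A] by simp
    finally have "(\<Sum>xs\<in>P. g xs i A) = real (fact (card A) * fact (n - card A)) / real (card A)" by simp
    also have "\<dots> = real (fact n) / real ((n - 1) choose (card A - 1)) / real n"
    proof -
      have h: "real (fact (card A) * fact (n - card A)) / real (card A) * real n = fact n / real ((n - 1) choose (card A - 1))"
        using fact_identity[of "card A" n] Fb[OF A] by simp
      have nz: "real n \<noteq> 0" using n by simp
      have "real (fact (card A) * fact (n - card A)) / real (card A)
          = real (fact (card A) * fact (n - card A)) / real (card A) * real n / real n" using nz by simp
      also have "\<dots> = fact n / real ((n - 1) choose (card A - 1)) / real n" by (simp only: h)
      finally show ?thesis by simp
    qed
    finally show ?thesis .
  qed
  have "(\<Sum>xs\<in>P. \<Sum>i<n. \<Sum>A\<in>F. g xs i A) = (\<Sum>i<n. \<Sum>A\<in>F. \<Sum>xs\<in>P. g xs i A)"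
    by (simp add: sum.swap[of _ P] )
  also have "\<dots> = (\<Sum>i<n. \<Sum>A\<in>F. real (fact n) / real ((n - 1) choose (card A - 1)) / real n)"
    using inner by simp
  also have "\<dots> = real n * (\<Sum>A\<in>F. real (fact n) / real ((n - 1) choose (card A - 1)) / real n)"
    by simp
  also have "\<dots> = real (fact n) * (\<Sum>A\<in>F. 1 / real ((n - 1) choose (card A - 1)))"
    using n by (simp add: sum_distrib_left field_simps)
  finally have eq: "(\<Sum>xs\<in>P. \<Sum>i<n. \<Sum>A\<in>F. g xs i A) = real (fact n) * (\<Sum>A\<in>F. 1 / real ((n - 1) choose (card A - 1)))" .
  have "(\<Sum>xs\<in>P. \<Sum>i<n. \<Sum>A\<in>F. g xs i A) \<le> (\<Sum>xs\<in>P. 1)"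
    using W1 by (rule sum_mono)
  also have "\<dots> = real (fact n)" using cardP by simp
  finally have "real (fact n) * (\<Sum>A\<in>F. 1 / real ((n - 1) choose (card A - 1))) \<le> real (fact n) * 1"
    using eq by simp
  moreover have "0 < real (fact n)" by simp
  ultimately show ?thesis by (simp only: mult_le_cancel_left_pos)
qed

lemma family_bound:
  assumes G: "goodfam n F"
  shows "card F \<le> (n - 1) choose (n div 2 - 1)"
proof (cases "F = {}")
  case True then show ?thesis by simp
next
  case False
  have finF: "finite F" using G goodfam_def by auto
  have Fb: "\<And>A. A \<in> F \<Longrightarrow> A \<subseteq> {..<n} \<and> 1 \<le> card A \<and> 2 * card A \<le> n" using G goodfam_def by auto
  obtain A0 where "A0 \<in> F" using False by blast
  then have n2: "2 \<le> n" using Fb by fastforce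
  define K where "K = (n - 1) choose (n div 2 - 1)"
  have Kpos: "0 < K" unfolding K_def using n2 by simp
  have le: "1 / real K \<le> 1 / real ((n - 1) choose (card A - 1))" if "A \<in> F" for A
  proof -
    have h1: "card A - 1 \<le> n div 2 - 1" and h2: "2 * (n div 2 - 1) \<le> n - 1" using Fb[OF that] n2 by auto
    have "(n - 1) choose (card A - 1) \<le> K" unfolding K_def by (rule binomial_mono[OF h1 h2])
    moreover have "card A - 1 \<le> n - 1" using Fb[OF that] by linarith
    then have "0 < (n - 1) choose (card A - 1)" by simp
    ultimately show ?thesis by (simp add: frac_le)
  qed
  have "real (card F) / real K = (\<Sum>A\<in>F. 1 / real K)" by simp
  also have "\<dots> \<le> (\<Sum>A\<in>F. 1 / real ((n - 1) choose (card A - 1)))" using le by (rule sum_mono)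
  also have "\<dots> \<le> 1" using lym_katona[OF G] n2 by simp
  finally have "real (card F) \<le> real K" using Kpos by simp
  then show ?thesis unfolding K_def by simp
qed



lemma h1: "(y - 1) div 2 = ((2*i+2) - 1) div (2::nat) \<Longrightarrow> 2*i+2 \<le> y \<Longrightarrow> y = 2*i+2" by presburger
lemma h2: "(y - 1) div 2 = ((2*i+1) - 1) div (2::nat) \<Longrightarrow> 1 \<le> y \<Longrightarrow> y = 2*i+1 \<or> y = 2*i+2" by presburger
lemma h3: "odd (z::nat) \<Longrightarrow> z = 2 * ((z - 1) div 2) + 1" by presburger
lemma h4: "even (z::nat) \<Longrightarrow> 1 \<le> z \<Longrightarrow> z = 2 * ((z - 2) div 2) + 2" by presburger
lemma h5: "odd (z::nat) \<Longrightarrow> z \<le> m*2 \<Longrightarrow> z + 1 \<le> m * 2" by presburger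
lemma h6: "odd (z::nat) \<Longrightarrow> (z - 1) div 2 = (z + 1 - 1) div 2" by presburger

lemma anti_ideal_iff:
  "rt_anti_ideal m s J \<longleftrightarrow> J \<subseteq> rt_elems m s \<and> (\<forall>x\<in>J. \<forall>y\<in>rt_elems m s. rt_le s x y \<longrightarrow> y \<in> J)"
proof
  assume "rt_anti_ideal m s J"
  then obtain I where I: "rt_ideal m s I" "J = rt_elems m s - I" unfolding rt_anti_ideal_def by blast
  show "J \<subseteq> rt_elems m s \<and> (\<forall>x\<in>J. \<forall>y\<in>rt_elems m s. rt_le s x y \<longrightarrow> y \<in> J)"
  proof (intro conjI ballI impI)
    show "J \<subseteq> rt_elems m s" using I by blast
    fix x y assume x: "x \<in> J" and y: "y \<in> rt_elems m s" and le: "rt_le s x y"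
    show "y \<in> J"
    proof (rule ccontr)
      assume "y \<notin> J"
      then have "y \<in> I" using I y by blast
      then have "x \<in> I" using I(1) x I(2) le unfolding rt_ideal_def by blast
      then show False using x I(2) by blast
    qed
  qed
next
  assume h: "J \<subseteq> rt_elems m s \<and> (\<forall>x\<in>J. \<forall>y\<in>rt_elems m s. rt_le s x y \<longrightarrow> y \<in> J)"
  have "rt_ideal m s (rt_elems m s - J)"
    unfolding rt_ideal_def using h by blast
  moreover have "J = rt_elems m s - (rt_elems m s - J)" using h by blast
  ultimately show "rt_anti_ideal m s J" unfolding rt_anti_ideal_def by blast
qed

lemma rt_le2: "rt_le 2 x y \<longleftrightarrow> (x - 1) div 2 = (y - 1) div 2 \<and> x \<le> y"
  unfolding rt_le_def by simp

lemma elems2: "rt_elems m 2 = {1..m*2}" unfolding rt_elems_def by simp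

lemma anti_ideal_tops:
  assumes "i < m" "j < m"
  shows "rt_anti_ideal m 2 {2*i+2, 2*j+2}"
  unfolding anti_ideal_iff elems2 rt_le2
proof (intro conjI ballI impI)
  show "{2*i+2, 2*j+2} \<subseteq> {1..m*2}" using assms by auto
  fix x y assume x: "x \<in> {2*i+2, 2*j+2}" and y: "y \<in> {1..m*2}" and le: "(x - 1) div 2 = (y - 1) div 2 \<and> x \<le> y"
  show "y \<in> {2*i+2, 2*j+2}"
  proof (cases "x = 2*i+2")
    case True then show ?thesis using h1[of y i] le by simp
  next
    case False then have "x = 2*j+2" using x by simp
    then show ?thesis using h1[of y j] le by simp
  qed
qed

lemma anti_ideal_block:
  assumes "i < m"
  shows "rt_anti_ideal m 2 {2*i+1, 2*i+2}"
  unfolding anti_ideal_iff elems2 rt_le2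
proof (intro conjI ballI impI)
  show "{2*i+1, 2*i+2} \<subseteq> {1..m*2}" using assms by auto
  fix x y assume x: "x \<in> {2*i+1, 2*i+2}" and y: "y \<in> {1..m*2}" and le: "(x - 1) div 2 = (y - 1) div 2 \<and> x \<le> y"
  have "(y - 1) div 2 = ((2*i+1) - 1) div 2" using x le by auto
  then have "y = 2*i+1 \<or> y = 2*i+2" using h2[of y i] y by simp
  then show "y \<in> {2*i+1, 2*i+2}" by simp
qed

lemma anti_ideal_cases:
  assumes J: "rt_anti_ideal m 2 J" "card J = 2"
  shows "(\<exists>i<m. J = {2*i+1, 2*i+2}) \<or> (\<exists>i<m. \<exists>j<m. i \<noteq> j \<and> J = {2*i+2, 2*j+2})"
proof -
  have A: "J \<subseteq> {1..m*2} \<and> (\<forall>x\<in>J. \<forall>y\<in>{1..m*2}. (x - 1) div 2 = (y - 1) div 2 \<and> x \<le> y \<longrightarrow> y \<in> J)"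
    using J(1) unfolding anti_ideal_iff elems2 rt_le2 .
  have sub: "J \<subseteq> {1..m*2}" using A by (rule conjunct1)
  have up: "y \<in> J" if "x \<in> J" "y \<in> {1..m*2}" "(x - 1) div 2 = (y - 1) div 2" "x \<le> y" for x y
    using A[THEN conjunct2, rule_format, OF that(1) that(2)] that(3,4) by blast
  obtain x y where xy: "J = {x, y}" "x \<noteq> y" using J(2)[unfolded card_2_iff] by blast
  have odd_case: "\<exists>i<m. J = {2*i+1, 2*i+2}" if z: "z \<in> J" "odd z" for z
  proof -
    define w where "w = (z - 1) div 2"
    have z1: "z \<in> {1..m*2}" using z sub by blast
    have "z + 1 \<in> {1..m*2}" using z1 h5[OF z(2), of m] by simp
    moreover have "(z - 1) div 2 = (z + 1 - 1) div 2" using h6[OF z(2)] .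
    ultimately have "z + 1 \<in> J" using up[OF z(1)] by simp
    have zw: "z = 2 * w + 1" using h3[OF z(2)] w_def by simp
    have "J = {z, z + 1}"
    proof
      show "{z, z + 1} \<subseteq> J" using \<open>z + 1 \<in> J\<close> z(1) by simp
      show "J \<subseteq> {z, z + 1}"
      proof
        fix u assume "u \<in> J"
        have "z = x \<or> z = y" "z + 1 = x \<or> z + 1 = y" "u = x \<or> u = y"
          using z(1) \<open>z + 1 \<in> J\<close> \<open>u \<in> J\<close> xy(1) by auto
        then show "u \<in> {z, z + 1}" by (elim disjE) simp_all
      qed
    qed
    then have "J = {2*w+1, 2*w+2}" using zw by simp
    moreover have "w < m" using z1 zw by simp
    ultimately show ?thesis by blast
  qed
  show ?thesis
  proof (cases "odd x \<or> odd y")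
    case True
    then obtain z where "z \<in> J" "odd z" using xy by auto
    then show ?thesis using odd_case by blast
  next
    case False
    have x1: "x \<in> {1..m*2}" "y \<in> {1..m*2}" using sub xy by auto
    define i where "i = (x - 2) div 2"
    define j where "j = (y - 2) div 2"
    have xi: "x = 2 * i + 2" using False x1 h4[of x] i_def by simp
    have yj: "y = 2 * j + 2" using False x1 h4[of y] j_def by simp
    have "i < m" "j < m" using x1 xi yj by auto
    moreover have "i \<noteq> j" using xi yj xy(2) by auto
    moreover have "J = {2*i+2, 2*j+2}" using xi yj xy(1) by simp
    ultimately show ?thesis by blast
  qed
qed



lemma lower_bound:
  assumes OCA: "is_OCA N 2 m 2 2 Arr" and m: "2 \<le> m"
  shows "m \<le> (N - 1) choose (N div 2 - 1) \<and> 2 \<le> N"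
proof -
  have vals: "\<And>r c. r < N \<Longrightarrow> c \<in> rt_elems m 2 \<Longrightarrow> Arr r c < 2"
    using OCA unfolding is_OCA_def by blast
  have cov: "\<And>J. rt_anti_ideal m 2 J \<Longrightarrow> card J = 2 \<Longrightarrow> covered N 2 Arr J"
    using OCA unfolding is_OCA_def by blast
  define c where "c i = 2*i+2" for i :: nat
  have cin: "c i \<in> rt_elems m 2" if "i < m" for i using that unfolding c_def elems2 by auto
  have qi: "\<exists>r<N. Arr r (c i) = p \<and> Arr r (c j) = q"
    if ij: "i < m" "j < m" "i \<noteq> j" and pq: "p < 2" "q < 2" for i j p q
  proof -
    have cne: "c i \<noteq> c j" using ij unfolding c_def by simp
    have "covered N 2 Arr {c i, c j}"
      using cov[OF anti_ideal_tops[OF ij(1,2)]] cne unfolding c_def by simp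
    then have h: "(\<forall>x\<in>{c i, c j}. (\<lambda>x. if x = c i then p else q) x < 2) \<longrightarrow>
        (\<exists>r<N. \<forall>x\<in>{c i, c j}. Arr r x = (\<lambda>x. if x = c i then p else q) x)"
      unfolding covered_def by (rule spec)
    have "\<forall>x\<in>{c i, c j}. (\<lambda>x. if x = c i then p else q) x < 2" using pq by auto
    then have "\<exists>r<N. \<forall>x\<in>{c i, c j}. Arr r x = (\<lambda>x. if x = c i then p else q) x"
      using h by blast
    then obtain r where "r < N" "\<forall>x\<in>{c i, c j}. Arr r x = (if x = c i then p else q)" by blast
    then show ?thesis using cne by auto
  qed
  define e where "e i = (if 2 * card {r. r < N \<and> Arr r (c i) = 1} \<le> N then 1 else 0 :: nat)" for i
  define T where "T i = {r. r < N \<and> Arr r (c i) = e i}" for i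
  have e2: "e i < 2" for i unfolding e_def by simp
  have Tsub: "T i \<subseteq> {..<N}" for i unfolding T_def by auto
  have finT: "finite (T i)" for i using Tsub finite_subset by blast
  have Thalf: "2 * card (T i) \<le> N" if i: "i < m" for i
  proof (cases "2 * card {r. r < N \<and> Arr r (c i) = 1} \<le> N")
    case True then show ?thesis unfolding T_def e_def by simp
  next
    case False
    have "T i = {..<N} - {r. r < N \<and> Arr r (c i) = 1}"
      using vals[OF _ cin[OF i]] False unfolding T_def e_def by (auto simp: less_2_cases_iff)
    moreover have "card {r. r < N \<and> Arr r (c i) = 1} \<le> N"
      using card_mono[of "{..<N}" "{r. r < N \<and> Arr r (c i) = 1}"] by auto
    moreover have "{r. r < N \<and> Arr r (c i) = 1} \<subseteq> {..<N}" by auto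
    ultimately have "card (T i) = N - card {r. r < N \<and> Arr r (c i) = 1}"
      using card_Diff_subset[of "{r. r < N \<and> Arr r (c i) = 1}" "{..<N}"] finite_subset by force
    then show ?thesis using False by linarith
  qed
  have Tint: "T i \<inter> T j \<noteq> {}" if ij: "i < m" "j < m" "i \<noteq> j" for i j
  proof -
    obtain r where "r < N" "Arr r (c i) = e i" "Arr r (c j) = e j" using qi[OF ij e2 e2] by blast
    then have "r \<in> T i \<inter> T j" unfolding T_def by simp
    then show ?thesis by blast
  qed
  have Tns: "\<not> T i \<subseteq> T j" if ij: "i < m" "j < m" "i \<noteq> j" for i j
  proof -
    have "1 - e j < 2" by simp
    obtain r where "r < N" "Arr r (c i) = e i" "Arr r (c j) = 1 - e j" using qi[OF ij e2 \<open>1 - e j < 2\<close>] by blast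
    moreover have "1 - e j \<noteq> e j" using e2[of j] by (auto simp: less_2_cases_iff)
    ultimately have "r \<in> T i" "r \<notin> T j" unfolding T_def by auto
    then show ?thesis by blast
  qed
  have Tne: "1 \<le> card (T i)" if i: "i < m" for i
  proof -
    define j where "j = (if i = 0 then 1 else 0 :: nat)"
    have "j < m" "i \<noteq> j" using m unfolding j_def by auto
    then have "T i \<noteq> {}" using Tint[OF i] by blast
    then show ?thesis using finT[of i] by (simp add: Suc_le_eq card_gt_0_iff)
  qed
  have injT: "inj_on T {..<m}"
  proof (rule inj_onI)
    fix i j assume "i \<in> {..<m}" "j \<in> {..<m}" "T i = T j"
    then show "i = j" using Tns[of i j] by auto
  qed
  have good: "goodfam N (T ` {..<m})"
    unfolding goodfam_def
  proof (intro conjI ballI impI)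
    show "finite (T ` {..<m})" by simp
  next
    fix A assume "A \<in> T ` {..<m}"
    then obtain i where "i < m" "A = T i" by auto
    then show "A \<subseteq> {..<N}" "1 \<le> card A" "2 * card A \<le> N" using Tsub Tne Thalf by auto
  next
    fix A B assume A: "A \<in> T ` {..<m}" and B: "B \<in> T ` {..<m}" and ne: "A \<noteq> B"
    obtain i where i: "i < m" "A = T i" using A by auto
    obtain j where j: "j < m" "B = T j" using B by auto
    have "i \<noteq> j" using ne i j by auto
    then show "A \<inter> B \<noteq> {}" "\<not> A \<subseteq> B" using Tint[OF i(1) j(1)] Tns[OF i(1) j(1)] i j by auto
  qed
  have "card (T ` {..<m}) = m" using card_image[OF injT] by simp
  then have "m \<le> (N - 1) choose (N div 2 - 1)" using family_bound[OF good] by simp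
  moreover have "2 \<le> N" using Thalf[of 0] Tne[of 0] m by linarith
  ultimately show ?thesis by simp
qed



lemma two_elems:
  assumes "2 \<le> card X"
  obtains x y where "x \<in> X" "y \<in> X" "x \<noteq> y"
proof -
  have fin: "finite X" using assms card.infinite by fastforce
  then have "X \<noteq> {}" using assms by auto
  then obtain x where x: "x \<in> X" by blast
  have "card (X - {x}) = card X - 1" using fin x by (simp add: card_Diff_singleton)
  then have "card (X - {x}) \<ge> 1" using assms by linarith
  then have "X - {x} \<noteq> {}" by (metis card.empty not_one_le_zero)
  then obtain y where "y \<in> X - {x}" by blast
  then show ?thesis using that x by blast
qed

lemma col_exists:
  assumes S: "S \<subseteq> {..<N}" "2 \<le> card S" "2 \<le> card ({..<N} - S)"
  shows "\<exists>a::nat\<Rightarrow>nat. (\<forall>r. a r < 2) \<and>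
           (\<forall>p q. p < 2 \<longrightarrow> q < 2 \<longrightarrow> (\<exists>r<N. a r = p \<and> (if r \<in> S then 1 else 0) = (q::nat)))"
proof -
  obtain s1 s2 where s: "s1 \<in> S" "s2 \<in> S" "s1 \<noteq> s2" using two_elems[OF S(2)] by blast
  obtain t1 t2 where t: "t1 \<in> {..<N} - S" "t2 \<in> {..<N} - S" "t1 \<noteq> t2" using two_elems[OF S(3)] by blast
  define a where "a r = (if r = s1 \<or> r = t1 then 1 else 0 :: nat)" for r
  have "\<exists>r<N. a r = p \<and> (if r \<in> S then 1 else 0) = (q::nat)" if pq: "p < 2" "q < 2" for p q
  proof -
    have s1N: "s1 < N" "s2 < N" using s S(1) by auto
    have t1N: "t1 < N" "t2 < N" using t by auto
    have d: "s2 \<noteq> t1" "t2 \<noteq> s1" using s t by auto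
    consider "p = 1" "q = 1" | "p = 0" "q = 1" | "p = 1" "q = 0" | "p = 0" "q = 0"
      using pq by (auto simp: less_2_cases_iff)
    then show ?thesis
    proof cases
      case 1 then show ?thesis using s1N s unfolding a_def by (intro exI[of _ s1]) auto
    next
      case 2 then show ?thesis using s1N s d unfolding a_def by (intro exI[of _ s2]) auto
    next
      case 3 then show ?thesis using t1N t unfolding a_def by (intro exI[of _ t1]) auto
    next
      case 4 then show ?thesis using t1N t d unfolding a_def by (intro exI[of _ t2]) auto
    qed
  qed
  moreover have "\<forall>r. a r < 2" unfolding a_def by simp
  ultimately show ?thesis by blast
qed

lemma G_qi:
  assumes B: "B1 \<subseteq> {..<N}" "B2 \<subseteq> {..<N}" "0 \<in> B1" "0 \<in> B2" "card B1 = k" "card B2 = k" "2 * k \<le> N"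
    and ne: "B1 \<noteq> B2" and pq: "p < 2" "q < 2"
  shows "\<exists>r<N. (if r \<in> B1 then 1 else 0) = (p::nat) \<and> (if r \<in> B2 then 1 else 0) = (q::nat)"
proof -
  have fin: "finite B1" "finite B2" using B finite_subset by blast+
  have ns: "\<not> X \<subseteq> Y" if "X \<in> {B1, B2}" "Y \<in> {B1, B2}" "X \<noteq> Y" for X Y
  proof
    assume "X \<subseteq> Y"
    moreover have "finite Y" "card X = card Y" using that fin B by auto
    ultimately have "X = Y" using card_subset_eq by blast
    then show False using that by simp
  qed
  consider "p = 1" "q = 1" | "p = 0" "q = 1" | "p = 1" "q = 0" | "p = 0" "q = 0"
    using pq by (auto simp: less_2_cases_iff)
  then show ?thesis
  proof cases
    case 1 then show ?thesis using B by (intro exI[of _ 0]) auto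
  next
    case 2
    obtain r where "r \<in> B2" "r \<notin> B1" using ns[of B2 B1] ne by auto
    then show ?thesis using 2 B by (intro exI[of _ r]) auto
  next
    case 3
    obtain r where "r \<in> B1" "r \<notin> B2" using ns[of B1 B2] ne by auto
    then show ?thesis using 3 B by (intro exI[of _ r]) auto
  next
    case 4
    have "card (B1 \<union> B2) + card (B1 \<inter> B2) = card B1 + card B2" using card_Un_Int[OF fin] by simp
    moreover have "card (B1 \<inter> B2) \<ge> 1" using B fin by (metis IntI card_0_eq empty_iff finite_Int less_one not_le)
    ultimately have cu: "card (B1 \<union> B2) < N" using B by linarith
    have "\<not> {..<N} \<subseteq> B1 \<union> B2"
    proof
      assume "{..<N} \<subseteq> B1 \<union> B2"
      then have "card {..<N} \<le> card (B1 \<union> B2)" using fin by (intro card_mono) auto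
      then show False using cu by simp
    qed
    then obtain r where "r < N" "r \<notin> B1" "r \<notin> B2" by auto
    then show ?thesis using 4 by (intro exI[of _ r]) auto
  qed
qed

lemma card_G:
  assumes "1 \<le> k" "0 < N"
  shows "card {B. B \<subseteq> {..<N} \<and> 0 \<in> B \<and> card B = k} = (N - 1) choose (k - 1)"
proof -
  let ?C = "{C. C \<subseteq> {1..<N} \<and> card C = k - 1}"
  have eq: "{B. B \<subseteq> {..<N} \<and> 0 \<in> B \<and> card B = k} = insert 0 ` ?C"
  proof (intro equalityI subsetI)
    fix B assume "B \<in> {B. B \<subseteq> {..<N} \<and> 0 \<in> B \<and> card B = k}"
    then have B: "B \<subseteq> {..<N}" "0 \<in> B" "card B = k" by auto
    have fB: "finite B" using B(1) finite_subset by blast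
    have "B - {0} \<in> ?C" using B fB by (auto simp: card_Diff_singleton)
    moreover have "B = insert 0 (B - {0})" using B by auto
    ultimately show "B \<in> insert 0 ` ?C" by blast
  next
    fix B assume "B \<in> insert 0 ` ?C"
    then obtain C where C: "C \<subseteq> {1..<N}" "card C = k - 1" "B = insert 0 C" by auto
    have fC: "finite C" using C(1) finite_subset by blast
    have "0 \<notin> C" using C(1) by auto
    then have "card B = k" using C fC assms by simp
    then show "B \<in> {B. B \<subseteq> {..<N} \<and> 0 \<in> B \<and> card B = k}" using C assms by auto
  qed
  have inj: "inj_on (insert 0) ?C"
  proof (rule inj_onI)
    fix C D assume "C \<in> ?C" "D \<in> ?C" "insert 0 C = insert 0 D"
    then have "0 \<notin> C" "0 \<notin> D" "insert 0 C = insert 0 D" by auto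
    then show "C = D" by (metis Diff_insert_absorb)
  qed
  have "card ?C = card {1..<N} choose (k - 1)" by (rule n_subsets) simp
  then show ?thesis using eq card_image[OF inj] by simp
qed



lemma construct:
  assumes m: "2 \<le> m" and k: "2 \<le> N div 2" and mb: "m \<le> (N - 1) choose (N div 2 - 1)"
  shows "OCA_exists N 2 m 2 2"
proof -
  define k where "k = N div 2"
  have N0: "0 < N" using k k_def by auto
  have k2N: "2 * k \<le> N" unfolding k_def by simp
  define G where "G = {B. B \<subseteq> {..<N} \<and> 0 \<in> B \<and> card B = k}"
  have cardG: "card G = (N - 1) choose (k - 1)" unfolding G_def using card_G[of k N] k N0 k_def by simp
  have finG: "finite G" unfolding G_def by (rule finite_subset[of _ "Pow {..<N}"]) auto
  obtain g where g: "g ` {..<m} \<subseteq> G" "inj_on g {..<m}"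
    using card_le_inj[of "{..<m}" G] finG cardG mb k_def by auto
  have gG: "g i \<subseteq> {..<N}" "0 \<in> g i" "card (g i) = k" if "i < m" for i
    using g(1) that unfolding G_def by auto
  have colp: "\<exists>a::nat\<Rightarrow>nat. (\<forall>r. a r < 2) \<and>
           (\<forall>p q. p < 2 \<longrightarrow> q < 2 \<longrightarrow> (\<exists>r<N. a r = p \<and> (if r \<in> g i then 1 else 0) = (q::nat)))"
    if i: "i < m" for i
  proof (rule col_exists)
    show "g i \<subseteq> {..<N}" using gG[OF i] by simp
    show "2 \<le> card (g i)" using gG[OF i] k k_def by simp
    have "card ({..<N} - g i) = N - k" using gG[OF i] finite_subset by (subst card_Diff_subset) auto
    then show "2 \<le> card ({..<N} - g i)" using k k2N k_def by simp
  qed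
  have "\<forall>i\<in>{..<m}. \<exists>a::nat\<Rightarrow>nat. (\<forall>r. a r < 2) \<and>
           (\<forall>p q. p < 2 \<longrightarrow> q < 2 \<longrightarrow> (\<exists>r<N. a r = p \<and> (if r \<in> g i then 1 else 0) = (q::nat)))"
    using colp by blast
  from bchoice[OF this] obtain acol :: "nat \<Rightarrow> nat \<Rightarrow> nat" where acol: "\<forall>i\<in>{..<m}. (\<forall>r. acol i r < 2) \<and>
           (\<forall>p q. p < 2 \<longrightarrow> q < 2 \<longrightarrow> (\<exists>r<N. acol i r = p \<and> (if r \<in> g i then 1 else 0) = (q::nat)))"
    by blast
  define Arr where "Arr r c = (if even c then (if r \<in> g ((c - 2) div 2) then 1 else 0) else acol ((c - 1) div 2) r)"
    for r c :: nat
  have Arr_top: "Arr r (2*i+2) = (if r \<in> g i then 1 else 0)" for r i unfolding Arr_def by simp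
  have Arr_bot: "Arr r (2*i+1) = acol i r" for r i unfolding Arr_def by simp
  have "is_OCA N 2 m 2 2 Arr"
    unfolding is_OCA_def
  proof (intro conjI allI impI ballI)
    show "2 \<le> (2::nat)" by simp
    show "2 \<le> m * 2" using m by simp
  next
    fix r c assume "r < N" and c: "c \<in> rt_elems m 2"
    show "Arr r c < 2"
    proof (cases "even c")
      case True then show ?thesis unfolding Arr_def by simp
    next
      case False
      have "(c - 1) div 2 < m" using c unfolding elems2 by auto
      then show ?thesis using acol False unfolding Arr_def by simp
    qed
  next
    fix J assume J: "rt_anti_ideal m 2 J \<and> card J = 2"
    show "covered N 2 Arr J"
      unfolding covered_def
    proof (intro allI impI)
      fix f :: "nat \<Rightarrow> nat" assume f: "\<forall>c\<in>J. f c < 2"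
      consider i where "i < m" "J = {2*i+1, 2*i+2}" | i j where "i < m" "j < m" "i \<noteq> j" "J = {2*i+2, 2*j+2}"
        using anti_ideal_cases[of m J] J by blast
      then show "\<exists>r<N. \<forall>c\<in>J. Arr r c = f c"
      proof cases
        case 1
        have p: "f (2*i+1) < 2" "f (2*i+2) < 2" using f 1 by auto
        obtain r where r: "r < N" "acol i r = f (2*i+1)" "(if r \<in> g i then 1 else 0) = f (2*i+2)"
          using acol 1(1) p by blast
        then show ?thesis using 1(2) Arr_top Arr_bot by (intro exI[of _ r]) auto
      next
        case 2
        have p: "f (2*i+2) < 2" "f (2*j+2) < 2" using f 2 by auto
        have "g i \<noteq> g j" using g(2) 2 using 2 by (simp add: inj_on_eq_iff)
        then obtain r where r: "r < N" "(if r \<in> g i then 1 else 0) = f (2*i+2)" "(if r \<in> g j then 1 else 0) = f (2*j+2)"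
          using G_qi[OF gG(1)[OF 2(1)] gG(1)[OF 2(2)] gG(2)[OF 2(1)] gG(2)[OF 2(2)] gG(3)[OF 2(1)] gG(3)[OF 2(2)] k2N _ p]
          by blast
        then show ?thesis using 2(4) Arr_top by (intro exI[of _ r]) auto
      qed
    qed
  qed
  then show ?thesis unfolding OCA_exists_def by blast
qed

theorem corollary2:
  fixes m :: nat
  assumes "m \<ge> 2"
  shows "OCAN 2 m 2 2 = (LEAST N::nat. 0 < N \<and> int m \<le> (if N div 2 \<ge> 1 then int ((N - 1) choose (N div 2 - 1)) else 0))"
proof -
  define \<Phi> where "\<Phi> N \<longleftrightarrow> 0 < N \<and> int m \<le> (if N div 2 \<ge> 1 then int ((N - 1) choose (N div 2 - 1)) else 0)" for N :: nat
  have ex: "\<Phi> (2*m+1)"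
  proof -
    have d: "(2*m+1) div 2 = m" by simp
    have "2 * m choose 1 \<le> 2 * m choose (m - 1)" by (rule binomial_mono) (use assms in auto)
    then have "m \<le> (2*m+1 - 1) choose ((2*m+1) div 2 - 1)" using d by simp
    then show ?thesis unfolding \<Phi>_def using assms d by simp
  qed
  define N0 where "N0 = (LEAST N. \<Phi> N)"
  have PN0: "\<Phi> N0" unfolding N0_def using ex by (rule LeastI)
  have k1: "1 \<le> N0 div 2" using PN0 assms unfolding \<Phi>_def by (auto split: if_splits)
  have mb: "m \<le> (N0 - 1) choose (N0 div 2 - 1)" using PN0 k1 unfolding \<Phi>_def by simp
  have k2: "2 \<le> N0 div 2"
  proof (rule ccontr)
    assume "\<not> 2 \<le> N0 div 2"
    then have "N0 div 2 - 1 = 0" using k1 by simp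
    then show False using mb assms by simp
  qed
  have OE: "OCA_exists N0 2 m 2 2" using construct[OF assms k2 mb] .
  have min: "N0 \<le> N" if oe: "OCA_exists N 2 m 2 2" for N
  proof -
    obtain Arr where "is_OCA N 2 m 2 2 Arr" using oe unfolding OCA_exists_def by blast
    from lower_bound[OF this assms] have "m \<le> (N - 1) choose (N div 2 - 1)" "2 \<le> N" by auto
    moreover have "1 \<le> N div 2" using \<open>2 \<le> N\<close> by simp
    ultimately have "\<Phi> N" unfolding \<Phi>_def by simp
    then show ?thesis unfolding N0_def by (rule Least_le)
  qed
  have "OCAN 2 m 2 2 = N0" unfolding OCAN_def
    by (rule Least_equality) (use OE min in auto)
  then show ?thesis unfolding N0_def \<Phi>_def by simp
qed


end
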